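(* Under the setup described in the context (a connected graph $G$ with $\mathrm{col}(G)=d\geq 3$, $M=K_1\vee G$ with apex $w$, and an $m$-fold cover $\mathcal{H}=(L,H)$ of $M$ with $m\geq d+3$ in which $E_H(L(u),L(v))$ is a perfect matching for every $uv\in E(M)$): if $L(w)$ contains at least $m-1$ level vertices, then there is a natural bijection between the $\mathcal{H}$-colorings of $M$ and the proper $m$-colorings of $M$; consequently $P_{DP}(M,\mathcal{H})=P(M,m)$.
   Context: All graphs are finite and simple. $\mathrm{col}(G)$ is the smallest $d$ such that some ordering of $V(G)$ has each vertex with at most $d-1$ earlier neighbors. $M=K_1\vee G$ is the join of $G$ with a single new vertex $w$. $P(M,m)$ is the chromatic polynomial. A cover of a graph $G$ is a pair $\mathcal{H}=(L,H)$ where $H$ is a graph and $L:V(G)\to\mathcal{P}(V(H))$ satisfies: (1) the sets $L(u)$ partition $V(H)$; (2) each $H[L(u)]$ is complete; (3) if $E_H(L(u),L(v))\neq\emptyset$ then $u=v$ or $uv\in E(G)$; (4) if $uv\in E(G)$ then $E_H(L(u),L(v))$ is a matching. $E_H(S,U)$ is the set of edges of $H$ between $S$ and $U$; the cover is $m$-fold if all $|L(u)|=m$; an $\mathcal{H}$-coloring is an independent set of $H$ of size $|V(G)|$, and $P_{DP}(G,\mathcal{H})$ counts them. Natural bijection: for an $m$-fold cover $\mathcal{H}$ of a graph $G$, the elements of each $L(v)$ can be labeled $\{(v,j):j\in[m]\}$ so that $(u,j)(v,j)\in E(H)$ for all $uv\in E(G)$ and $j\in[m]$. Setup: write $L(w)=\{(w,j):j\in[m]\}$;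 for $j\in[m]$ and $v\in V(G)$ let $H^{(j)}=H-N_H[(w,j)]$ and $L^{(j)}(v)=L(v)\setminus N_H((w,j))$, so $\mathcal{H}^{(j)}=(L^{(j)},H^{(j)})$ is an $(m-1)$-fold cover of $G$. Cross-edges of $H^{(j)}$ are its edges joining $L^{(j)}(x)$ and $L^{(j)}(y)$ for distinct $x,y\in V(G)$. The vertex $(w,t)$ is a level vertex if $H^{(t)}$ has exactly $|E(G)|(m-1)$ cross-edges. *)

theory Defs
  imports Main "HOL-Library.FuncSet"
begin

definition simple_graph :: "'a set \<Rightarrow> 'a set set \<Rightarrow> bool" where
  "simple_graph V E \<longleftrightarrow> finite V \<and>
     (\<forall>e\<in>E. \<exists>u v. e = {u, v} \<and> u \<noteq> v \<and> u \<in> V \<and> v \<in> V)"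

definition connected_graph :: "'a set \<Rightarrow> 'a set set \<Rightarrow> bool" where
  "connected_graph V E \<longleftrightarrow> V \<noteq> {} \<and>
     (\<forall>u\<in>V. \<forall>v\<in>V. (u, v) \<in> {(x, y). {x, y} \<in> E}\<^sup>*)"

definition col_ordering :: "'a set \<Rightarrow> 'a set set \<Rightarrow> nat \<Rightarrow> bool" where
  "col_ordering V E d \<longleftrightarrow> (\<exists>xs. distinct xs \<and> set xs = V \<and>
     (\<forall>i<length xs. card {j. j < i \<and> {xs ! i, xs ! j} \<in> E} + 1 \<le> d))"

definition col :: "'a set \<Rightarrow> 'a set set \<Rightarrow> nat" where
  "col V E = (LEAST d. col_ordering V E d)"

definition join_vertices :: "'a \<Rightarrow> 'a set \<Rightarrow> 'a set" where
  "join_vertices w V = insert w V"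

definition join_edges :: "'a \<Rightarrow> 'a set \<Rightarrow> 'a set set \<Rightarrow> 'a set set" where
  "join_edges w V E = E \<union> {{w, v} | v. v \<in> V}"

definition is_cover ::
  "'a set \<Rightarrow> 'a set set \<Rightarrow> ('a \<Rightarrow> 'b set) \<Rightarrow> 'b set \<Rightarrow> 'b set set \<Rightarrow> bool" where
  "is_cover V E L VH EH \<longleftrightarrow>
     simple_graph VH EH \<and>
     \<comment> \<open>(1) the sets L(u) partition V(H)\<close>
     (\<forall>u\<in>V. L u \<noteq> {}) \<and>
     (\<Union>u\<in>V. L u) = VH \<and>
     (\<forall>u\<in>V. \<forall>v\<in>V. u \<noteq> v \<longrightarrow> L u \<inter> L v = {}) \<and>
     \<comment> \<open>(2) each H[L(u)] is complete\<close>
     (\<forall>u\<in>V. \<forall>a\<in>L u. \<forall>b\<in>L u. a \<noteq> b \<longrightarrow> {a, b} \<in> EH) \<and>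
     \<comment> \<open>(3) edges between L(u), L(v) only if u = v or uv is an edge\<close>
     (\<forall>u\<in>V. \<forall>v\<in>V. (\<exists>a\<in>L u. \<exists>b\<in>L v. {a, b} \<in> EH) \<longrightarrow> u = v \<or> {u, v} \<in> E) \<and>
     \<comment> \<open>(4) for uv in E, E_H(L(u),L(v)) is a matching\<close>
     (\<forall>u\<in>V. \<forall>v\<in>V. {u, v} \<in> E \<longrightarrow>
        (\<forall>a\<in>L u. \<forall>b\<in>L v. \<forall>b'\<in>L v. {a, b} \<in> EH \<and> {a, b'} \<in> EH \<longrightarrow> b = b'))"

definition m_fold :: "'a set \<Rightarrow> ('a \<Rightarrow> 'b set) \<Rightarrow> nat \<Rightarrow> bool" where
  "m_fold V L m \<longleftrightarrow> (\<forall>u\<in>V. finite (L u) \<and> card (L u) = m)"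

text \<open>E_H(L(u),L(v)) is a perfect matching for every edge uv.\<close>

definition full_cover :: "'a set \<Rightarrow> 'a set set \<Rightarrow> ('a \<Rightarrow> 'b set) \<Rightarrow> 'b set set \<Rightarrow> bool" where
  "full_cover V E L EH \<longleftrightarrow>
     (\<forall>u\<in>V. \<forall>v\<in>V. {u, v} \<in> E \<longrightarrow> (\<forall>a\<in>L u. \<exists>!b. b \<in> L v \<and> {a, b} \<in> EH))"

definition independent :: "'b set set \<Rightarrow> 'b set \<Rightarrow> bool" where
  "independent EH I \<longleftrightarrow> (\<forall>a\<in>I. \<forall>b\<in>I. {a, b} \<notin> EH)"

definition DP_colorings :: "'a set \<Rightarrow> 'b set \<Rightarrow> 'b set set \<Rightarrow> 'b set set" where
  "DP_colorings V VH EH = {I. I \<subseteq> VH \<and> independent EH I \<and> card I = card V}"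

definition P_DP :: "'a set \<Rightarrow> 'b set \<Rightarrow> 'b set set \<Rightarrow> nat" where
  "P_DP V VH EH = card (DP_colorings V VH EH)"

definition proper_colorings :: "'a set \<Rightarrow> 'a set set \<Rightarrow> nat \<Rightarrow> ('a \<Rightarrow> nat) set" where
  "proper_colorings V E m =
     {f. f \<in> V \<rightarrow>\<^sub>E {..<m} \<and> (\<forall>u\<in>V. \<forall>v\<in>V. {u, v} \<in> E \<longrightarrow> f u \<noteq> f v)}"

definition chrom_poly :: "'a set \<Rightarrow> 'a set set \<Rightarrow> nat \<Rightarrow> nat" where
  "chrom_poly V E m = card (proper_colorings V E m)"

definition closed_nbhd :: "'b set set \<Rightarrow> 'b \<Rightarrow> 'b set" where
  "closed_nbhd EH x = insert x {y. {x, y} \<in> EH}"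

text \<open>Cross-edges of H^(x) = H - N_H[x]: edges joining L^(x)(a) and L^(x)(b) for
  distinct vertices a, b of G.\<close>

definition cross_edges ::
  "'a set \<Rightarrow> ('a \<Rightarrow> 'b set) \<Rightarrow> 'b set set \<Rightarrow> 'b \<Rightarrow> 'b set set" where
  "cross_edges V L EH x =
     {e \<in> EH. \<exists>u v a b. u \<in> V \<and> v \<in> V \<and> u \<noteq> v \<and>
        a \<in> L u - closed_nbhd EH x \<and> b \<in> L v - closed_nbhd EH x \<and> e = {a, b}}"

definition level_vertex ::
  "'a set \<Rightarrow> 'a set set \<Rightarrow> ('a \<Rightarrow> 'b set) \<Rightarrow> 'b set set \<Rightarrow> nat \<Rightarrow> 'b \<Rightarrow> bool" where
  "level_vertex V E L EH m x \<longleftrightarrow> card (cross_edges V L EH x) = card E * (m - 1)"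

definition natural_labeling ::
  "'a set \<Rightarrow> 'a set set \<Rightarrow> ('a \<Rightarrow> 'b set) \<Rightarrow> 'b set set \<Rightarrow> nat \<Rightarrow> ('a \<Rightarrow> nat \<Rightarrow> 'b) \<Rightarrow> bool" where
  "natural_labeling V E L EH m \<phi> \<longleftrightarrow>
     (\<forall>v\<in>V. bij_betw (\<phi> v) {..<m} (L v)) \<and>
     (\<forall>u\<in>V. \<forall>v\<in>V. {u, v} \<in> E \<longrightarrow> (\<forall>j<m. {\<phi> u j, \<phi> v j} \<in> EH))"

end

theory Submission
  imports Defs
begin

lemma bij_lemma:
  assumes cov: "is_cover V E L VH EH" and fin: "finite V"
    and nat: "natural_labeling V E L EH m \<phi>"
  shows "bij_betw (\<lambda>f. (\<lambda>v. \<phi> v (f v)) ` V) (proper_colorings V E m) (DP_colorings V VH EH)"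
proof -
  note cv0 = cov[unfolded is_cover_def]
  note cv = cv0[THEN conjunct1] cv0[THEN conjunct2, THEN conjunct2, THEN conjunct1]
    cv0[THEN conjunct2, THEN conjunct2, THEN conjunct2, THEN conjunct1]
    cv0[THEN conjunct2, THEN conjunct2, THEN conjunct2, THEN conjunct2, THEN conjunct1]
    cv0[THEN conjunct2, THEN conjunct2, THEN conjunct2, THEN conjunct2, THEN conjunct2, THEN conjunct1]
    cv0[THEN conjunct2, THEN conjunct2, THEN conjunct2, THEN conjunct2, THEN conjunct2, THEN conjunct2]
  have sg: "simple_graph VH EH" using cv(1) .
  have un: "(\<Union>u\<in>V. L u) = VH" using cv(2) .
  have disj: "\<And>u v. u\<in>V \<Longrightarrow> v\<in>V \<Longrightarrow> u \<noteq> v \<Longrightarrow> L u \<inter> L v = {}" using cv(3) by blast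
  have cliq: "\<And>u a b. u\<in>V \<Longrightarrow> a\<in>L u \<Longrightarrow> b\<in>L u \<Longrightarrow> a \<noteq> b \<Longrightarrow> {a, b} \<in> EH" using cv(4) by blast
  have adj3: "\<And>u v a b. u\<in>V \<Longrightarrow> v\<in>V \<Longrightarrow> a\<in>L u \<Longrightarrow> b\<in>L v \<Longrightarrow> {a, b} \<in> EH \<Longrightarrow> u = v \<or> {u, v} \<in> E"
    using cv(5) by blast
  have m4: "\<And>u v a b b'. u\<in>V \<Longrightarrow> v\<in>V \<Longrightarrow> {u, v} \<in> E \<Longrightarrow> a\<in>L u \<Longrightarrow> b\<in>L v \<Longrightarrow> b'\<in>L v
              \<Longrightarrow> {a, b} \<in> EH \<Longrightarrow> {a, b'} \<in> EH \<Longrightarrow> b = b'"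
    using cv(6) by blast
  from nat have bij: "\<And>v. v\<in>V \<Longrightarrow> bij_betw (\<phi> v) {..<m} (L v)"
    and ed: "\<And>u v j. u\<in>V \<Longrightarrow> v\<in>V \<Longrightarrow> {u, v} \<in> E \<Longrightarrow> j < m \<Longrightarrow> {\<phi> u j, \<phi> v j} \<in> EH"
    unfolding natural_labeling_def by blast+
  have noloop: "{a, a} \<notin> EH" for a
  proof
    assume "{a, a} \<in> EH"
    then obtain u v where "{a, a} = {u, v}" "u \<noteq> v" using sg unfolding simple_graph_def by blast
    then show False by (metis doubleton_eq_iff)
  qed
  have finVH: "finite VH" using sg simple_graph_def by blast
  have inL: "\<phi> v j \<in> L v" if "v \<in> V" "j < m" for v j
    using bij[OF that(1)] that(2) bij_betwE by blast
  have LVH: "L v \<subseteq> VH" if "v \<in> V" for v using un that by blast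
  have injp: "i = j" if "v \<in> V" "i < m" "j < m" "\<phi> v i = \<phi> v j" for v i j
    using bij[OF that(1)] that(2-4) unfolding bij_betw_def inj_on_def by blast
  have own: "u = v" if "u\<in>V" "v\<in>V" "a \<in> L u" "a \<in> L v" for u v a
    using disj that by blast
  define F where "F = (\<lambda>f. (\<lambda>v. \<phi> v (f v)) ` V)"
  have Pin: "f v < m" if "f \<in> proper_colorings V E m" "v \<in> V" for f v
    using that unfolding proper_colorings_def by auto
  have Pprop: "f u \<noteq> f v" if "f \<in> proper_colorings V E m" "u \<in> V" "v \<in> V" "{u,v} \<in> E" for f u v
    using that unfolding proper_colorings_def by auto
  have Pext: "f v = undefined" if "f \<in> proper_colorings V E m" "v \<notin> V" for f v
    using that unfolding proper_colorings_def by auto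
  have "inj_on F (proper_colorings V E m)"
  proof (rule inj_onI)
    fix f g assume f: "f \<in> proper_colorings V E m" and g: "g \<in> proper_colorings V E m" and eq: "F f = F g"
    show "f = g"
    proof
      fix v show "f v = g v"
      proof (cases "v \<in> V")
        case True
        have "\<phi> v (f v) \<in> F g" using eq True unfolding F_def by blast
        then obtain u where u: "u \<in> V" "\<phi> v (f v) = \<phi> u (g u)" unfolding F_def by blast
        have "u = v" using own[OF u(1) True, of "\<phi> v (f v)"] inL[OF True Pin[OF f True]] inL[OF u(1) Pin[OF g u(1)]] u(2) by simp
        then show ?thesis using injp[OF True Pin[OF f True] Pin[OF g True]] u(2) by simp
      next
        case False then show ?thesis using Pext[OF f False] Pext[OF g False] by simp
      qed
    qed
  qed
  moreover have "F ` proper_colorings V E m \<subseteq> DP_colorings V VH EH"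
  proof
    fix I assume "I \<in> F ` proper_colorings V E m"
    then obtain f where f: "f \<in> proper_colorings V E m" and I: "I = F f" by blast
    have "I \<subseteq> VH" using I LVH inL Pin[OF f] unfolding F_def by blast
    moreover have "independent EH I"
      unfolding independent_def
    proof (intro ballI)
      fix a b assume "a \<in> I" "b \<in> I"
      then obtain u v where uv: "u \<in> V" "v \<in> V" "a = \<phi> u (f u)" "b = \<phi> v (f v)" using I F_def by blast
      show "{a, b} \<notin> EH"
      proof
        assume ab: "{a, b} \<in> EH"
        show False
        proof (cases "u = v")
          case True then show False using ab uv noloop by simp
        next
          case False
          then have e: "{u, v} \<in> E" using adj3[OF uv(1,2) _ _ ab] inL Pin[OF f] uv by blast
          have "{\<phi> u (f u), \<phi> v (f u)} \<in> EH" using ed[OF uv(1,2) e Pin[OF f uv(1)]] .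
          then have "\<phi> v (f v) = \<phi> v (f u)"
            using m4[OF uv(1,2) e, of "\<phi> u (f u)" "\<phi> v (f v)" "\<phi> v (f u)"] inL Pin[OF f] uv ab by blast
          then have "f v = f u" using injp[OF uv(2)] Pin[OF f] uv by blast
          then show False using Pprop[OF f uv(1,2) e] by simp
        qed
      qed
    qed
    moreover have "card I = card V"
    proof -
      have "inj_on (\<lambda>v. \<phi> v (f v)) V"
      proof (rule inj_onI)
        fix u v assume uv: "u \<in> V" "v \<in> V" "\<phi> u (f u) = \<phi> v (f v)"
        show "u = v" using own[OF uv(1,2), of "\<phi> u (f u)"] inL[OF uv(1) Pin[OF f uv(1)]] inL[OF uv(2) Pin[OF f uv(2)]] uv(3) by simp
      qed
      then show ?thesis using I F_def card_image by blast
    qed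
    ultimately show "I \<in> DP_colorings V VH EH" unfolding DP_colorings_def by blast
  qed
  moreover have "DP_colorings V VH EH \<subseteq> F ` proper_colorings V E m"
  proof
    fix I assume "I \<in> DP_colorings V VH EH"
    then have IVH: "I \<subseteq> VH" and ind: "\<And>a b. a \<in> I \<Longrightarrow> b \<in> I \<Longrightarrow> {a,b} \<notin> EH" and cI: "card I = card V"
      unfolding DP_colorings_def independent_def by blast+
    have finI: "finite I" using IVH finVH finite_subset by blast
    have uniq: "a = b" if "v \<in> V" "a \<in> I" "b \<in> I" "a \<in> L v" "b \<in> L v" for v a b
      using cliq ind that by blast
    define ow where "ow a = (SOME v. v \<in> V \<and> a \<in> L v)" for a
    have ow: "ow a \<in> V \<and> a \<in> L (ow a)" if "a \<in> I" for a
    proof -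
      have "\<exists>v. v \<in> V \<and> a \<in> L v" using that IVH un by blast
      then show ?thesis unfolding ow_def by (rule someI_ex)
    qed
    have "inj_on ow I"
    proof (rule inj_onI)
      fix a b assume "a \<in> I" "b \<in> I" "ow a = ow b"
      then show "a = b" using uniq[of "ow a" a b] ow[of a] ow[of b] by simp
    qed
    then have "card (ow ` I) = card V" using cI card_image by metis
    moreover have "ow ` I \<subseteq> V" using ow by blast
    ultimately have oI: "ow ` I = V" using card_subset_eq fin by metis
    have ex: "\<exists>j. j < m \<and> \<phi> v j \<in> I" if vV: "v \<in> V" for v
    proof -
      obtain a where a: "a \<in> I" "ow a = v" using oI vV by blast
      then have "a \<in> L v" using ow by blast
      then obtain j where "j < m" "a = \<phi> v j" using bij[OF vV] unfolding bij_betw_def by auto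
      then show ?thesis using a by blast
    qed
    define f where "f = restrict (\<lambda>v. SOME j. j < m \<and> \<phi> v j \<in> I) V"
    have fv: "f v < m \<and> \<phi> v (f v) \<in> I" if "v \<in> V" for v
      using someI_ex[OF ex[OF that]] that unfolding f_def by simp
    have fP: "f \<in> proper_colorings V E m"
      unfolding proper_colorings_def
    proof (intro CollectI conjI ballI impI)
      show "f \<in> V \<rightarrow>\<^sub>E {..<m}" using fv unfolding f_def by auto
    next
      fix u v assume "u \<in> V" "v \<in> V" "{u, v} \<in> E"
      then show "f u \<noteq> f v" using ed[of u v "f u"] fv[of u] fv[of v] ind[of "\<phi> u (f u)" "\<phi> v (f v)"] by auto
    qed
    have "I = F f"
    proof
      show "I \<subseteq> F f"
      proof
        fix a assume a: "a \<in> I"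
        then have "a = \<phi> (ow a) (f (ow a))" using uniq[of "ow a" a "\<phi> (ow a) (f (ow a))"] ow[of a] fv[of "ow a"] inL[of "ow a" "f (ow a)"] by simp
        then show "a \<in> F f" unfolding F_def using ow a by blast
      qed
      show "F f \<subseteq> I" unfolding F_def using fv by blast
    qed
    then show "I \<in> F ` proper_colorings V E m" using fP by blast
  qed
  ultimately show ?thesis unfolding bij_betw_def F_def by blast
qed

lemma core:
  fixes V :: "'a set" and E :: "'a set set" and w :: 'a
    and L :: "'a \<Rightarrow> 'b set" and VH :: "'b set" and EH :: "'b set set"
    and m :: nat
  assumes G: "simple_graph V E"
    and wnew: "w \<notin> V"
    and cover: "is_cover (join_vertices w V) (join_edges w V E) L VH EH"
    and mfold: "m_fold (join_vertices w V) L m"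
    and m2: "m \<ge> 2"
    and full: "full_cover (join_vertices w V) (join_edges w V E) L EH"
    and levels: "card {x \<in> L w. level_vertex V E L EH m x} \<ge> m - 1"
  shows "\<exists>\<phi>. natural_labeling (join_vertices w V) (join_edges w V E) L EH m \<phi>"
proof -
  define V' where "V' = join_vertices w V"
  define E' where "E' = join_edges w V E"
  have V'_def2: "V' = insert w V" unfolding V'_def join_vertices_def ..
  have E'_def2: "E' = E \<union> {{w, v} | v. v \<in> V}" unfolding E'_def join_edges_def ..
  have finV: "finite V" using G unfolding simple_graph_def by blast
  have Eedge: "\<exists>u v. e = {u, v} \<and> u \<noteq> v \<and> u \<in> V \<and> v \<in> V" if "e \<in> E" for e
    using G that unfolding simple_graph_def by blast
  have EV: "u \<in> V \<and> v \<in> V" if "{u, v} \<in> E" for u v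
    using Eedge[OF that] by (metis doubleton_eq_iff)
  have finE: "finite E"
  proof -
    have "E \<subseteq> Pow V" using Eedge by blast
    then show ?thesis using finV finite_subset by blast
  qed
  have E'E: "{u, v} \<in> E'" if "{u, v} \<in> E" for u v using that E'_def2 by blast
  have E'w: "{w, v} \<in> E' \<and> {v, w} \<in> E'" if "v \<in> V" for v using that E'_def2 by (auto simp: insert_commute)
  have E'sym: "{v, u} \<in> E'" if "{u, v} \<in> E'" for u v using that by (simp add: insert_commute)
  have E'V: "{u, v} \<in> E" if "{u, v} \<in> E'" "u \<in> V" "v \<in> V" for u v
  proof -
    have "{u, v} \<notin> {{w, v} | v. v \<in> V}" using that(2,3) wnew by (auto simp: doubleton_eq_iff)
    then show ?thesis using that(1) E'_def2 by blast
  qed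
  note cv0 = cover[folded V'_def E'_def, unfolded is_cover_def]
  note cv = cv0[THEN conjunct1] cv0[THEN conjunct2, THEN conjunct2, THEN conjunct1]
    cv0[THEN conjunct2, THEN conjunct2, THEN conjunct2, THEN conjunct1]
    cv0[THEN conjunct2, THEN conjunct2, THEN conjunct2, THEN conjunct2, THEN conjunct1]
    cv0[THEN conjunct2, THEN conjunct2, THEN conjunct2, THEN conjunct2, THEN conjunct2, THEN conjunct1]
    cv0[THEN conjunct2, THEN conjunct2, THEN conjunct2, THEN conjunct2, THEN conjunct2, THEN conjunct2]
  have adj3: "\<And>u v a b. u\<in>V' \<Longrightarrow> v\<in>V' \<Longrightarrow> a\<in>L u \<Longrightarrow> b\<in>L v \<Longrightarrow> {a, b} \<in> EH \<Longrightarrow> u = v \<or> {u, v} \<in> E'"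
    using cv(5) by blast
  have fullr: "\<exists>!b. b \<in> L v \<and> {a, b} \<in> EH" if "u \<in> V'" "v \<in> V'" "{u, v} \<in> E'" "a \<in> L u" for u v a
    using full[folded V'_def E'_def] that unfolding full_cover_def by blast
  have cardL: "finite (L v) \<and> card (L v) = m" if "v \<in> V'" for v
    using mfold[folded V'_def] that unfolding m_fold_def by blast
  define pt where "pt v a = (THE b. b \<in> L v \<and> {a, b} \<in> EH)" for v a
  have ptP: "pt v a \<in> L v \<and> {a, pt v a} \<in> EH \<and> (\<forall>b. b \<in> L v \<and> {a, b} \<in> EH \<longrightarrow> b = pt v a)"
    if "u \<in> V'" "v \<in> V'" "{u, v} \<in> E'" "a \<in> L u" for u v a
  proof -
    have ex: "\<exists>!b. b \<in> L v \<and> {a, b} \<in> EH" using fullr[OF that] .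
    have "pt v a \<in> L v \<and> {a, pt v a} \<in> EH" unfolding pt_def using theI'[OF ex] .
    moreover have "\<forall>b. b \<in> L v \<and> {a, b} \<in> EH \<longrightarrow> b = pt v a"
      unfolding pt_def using the1_equality[OF ex] by metis
    ultimately show ?thesis by blast
  qed
  have wV': "w \<in> V'" and VV': "V \<subseteq> V'" using V'_def2 by auto
  have ptw: "pt v x \<in> L v \<and> {x, pt v x} \<in> EH \<and> (\<forall>b. b \<in> L v \<and> {x, b} \<in> EH \<longrightarrow> b = pt v x)"
    if "v \<in> V" "x \<in> L w" for v x
    using ptP[OF wV' _ _ that(2)] E'w[OF that(1)] VV' that(1) by blast
  have ptE: "pt v a \<in> L v \<and> {a, pt v a} \<in> EH \<and> (\<forall>b. b \<in> L v \<and> {a, b} \<in> EH \<longrightarrow> b = pt v a)"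
    if "{u, v} \<in> E" "a \<in> L u" for u v a
    using ptP[OF _ _ E'E[OF that(1)] that(2)] EV[OF that(1)] VV' by blast
  have bijw: "bij_betw (pt v) (L w) (L v)" if vV: "v \<in> V" for v
  proof -
    have inj: "inj_on (pt v) (L w)"
    proof (rule inj_onI)
      fix x y assume xy: "x \<in> L w" "y \<in> L w" "pt v x = pt v y"
      have b: "pt v x \<in> L v" "{x, pt v x} \<in> EH" "{y, pt v x} \<in> EH" using ptw[OF vV xy(1)] ptw[OF vV xy(2)] xy(3) by auto
      have "\<forall>c. c \<in> L w \<and> {pt v x, c} \<in> EH \<longrightarrow> c = pt w (pt v x)"
        using ptP[OF _ wV' _ b(1)] E'w[OF vV] VV' vV by blast
      then show "x = y" using b xy(1,2) by (metis insert_commute)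
    qed
    have sub: "pt v ` L w \<subseteq> L v" using ptw[OF vV] by blast
    have "card (pt v ` L w) = card (L v)" using card_image[OF inj] cardL wV' VV' vV by auto
    then have "pt v ` L w = L v" using card_subset_eq[OF _ sub] cardL VV' vV by blast
    then show ?thesis using inj unfolding bij_betw_def by blast
  qed
  define good where "good x \<longleftrightarrow> (\<forall>u v. {u, v} \<in> E \<longrightarrow> {pt u x, pt v x} \<in> EH)" for x
  have lev_good: "good x" if xw: "x \<in> L w" and lev: "level_vertex V E L EH m x" for x
  proof (rule ccontr)
    assume "\<not> good x"
    then obtain u0 v0 where e0: "{u0, v0} \<in> E" and bad: "{pt u0 x, pt v0 x} \<notin> EH"
      unfolding good_def by blast
    define N where "N = closed_nbhd EH x"
    have ptN: "pt v x \<in> N" if "v \<in> V" for v using ptw[OF that xw] unfolding N_def closed_nbhd_def by blast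
    define D where "D u v = {c. \<exists>a b. a \<in> L u - N \<and> b \<in> L v - N \<and> {a, b} \<in> EH \<and> c = {a, b}}" for u v
    have Dsym: "D u v = D v u" for u v 
    proof -
      have "D u v \<subseteq> D v u" for u v
      proof
        fix c assume "c \<in> D u v"
        then obtain a b where "a \<in> L u - N" "b \<in> L v - N" "{a, b} \<in> EH" "c = {a, b}" unfolding D_def by blast
        moreover have "{a, b} = {b, a}" by (rule insert_commute)
        ultimately show "c \<in> D v u" unfolding D_def by auto
      qed
      then show ?thesis by blast
    qed
    define A where "A u v = {a \<in> L u - N. \<exists>b \<in> L v - N. {a, b} \<in> EH}" for u v
    have DA: "finite (D u v) \<and> card (D u v) \<le> card (A u v)" if e: "{u, v} \<in> E" for u v
    proof -
      have uV: "u \<in> V" using EV[OF e] by blast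
      have finA: "finite (A u v)" using cardL[of u] uV VV' unfolding A_def by auto
      have "D u v \<subseteq> (\<lambda>a. {a, pt v a}) ` A u v"
      proof
        fix c assume "c \<in> D u v"
        then obtain a b where ab: "a \<in> L u - N" "b \<in> L v - N" "{a, b} \<in> EH" "c = {a, b}" unfolding D_def by blast
        then have "b = pt v a" using ptE[OF e, of a] by blast
        then show "c \<in> (\<lambda>a. {a, pt v a}) ` A u v" using ab unfolding A_def by blast
      qed
      moreover have "finite ((\<lambda>a. {a, pt v a}) ` A u v)" using finA by blast
      ultimately show ?thesis using card_mono card_image_le[OF finA] finite_subset by (metis le_trans)
    qed
    have Dle: "finite (D u v) \<and> card (D u v) \<le> m - 1" if e: "{u, v} \<in> E" for u v
    proof -
      have uV: "u \<in> V" using EV[OF e] by blast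
      have fin: "finite (L u)" "card (L u) = m" using cardL[of u] uV VV' by auto
      have "A u v \<subseteq> L u - {pt u x}" using ptN[OF uV] unfolding A_def by blast
      then have "card (A u v) \<le> card (L u - {pt u x})" using fin by (intro card_mono) auto
      also have "\<dots> = m - 1" using fin ptw[OF uV xw] by simp
      finally show ?thesis using DA[OF e] by simp
    qed
    have Dbad: "card (D u v) \<le> m - 2" if e: "{u, v} \<in> E" and bd: "{pt u x, pt v x} \<notin> EH" for u v
    proof -
      have uV: "u \<in> V" and vV: "v \<in> V" using EV[OF e] by auto
      have fin: "finite (L u)" "card (L u) = m" using cardL[of u] uV VV' by auto
      have e2: "{v, u} \<in> E" using e by (simp add: insert_commute)
      have pv: "pt v x \<in> L v" using ptw[OF vV xw] by blast
      define q where "q = pt u (pt v x)"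
      have q: "q \<in> L u" "{pt v x, q} \<in> EH" using ptE[OF e2 pv] unfolding q_def by auto
      have qp: "q \<noteq> pt u x" using q(2) bd by (auto simp: insert_commute)
      have pu: "pt u x \<in> L u" using ptw[OF uV xw] by blast
      have "q \<notin> A u v"
      proof
        assume "q \<in> A u v"
        then obtain b where b: "b \<in> L v - N" "{q, b} \<in> EH" unfolding A_def by blast
        have u1: "\<forall>c. c \<in> L v \<and> {q, c} \<in> EH \<longrightarrow> c = pt v q" using ptE[OF e q(1)] by blast
        have "{q, pt v x} \<in> EH" using q(2) by (simp add: insert_commute)
        then have "b = pt v q" "pt v x = pt v q" using u1 b pv by blast+
        then show False using b ptN[OF vV] by simp
      qed
      then have "A u v \<subseteq> L u - {pt u x, q}" using ptN[OF uV] unfolding A_def by blast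
      then have "card (A u v) \<le> card (L u - {pt u x, q})" using fin by (intro card_mono) auto
      also have "\<dots> = m - 2" using card_Diff_subset[of "{pt u x, q}" "L u"] fin pu q(1) qp by auto
      finally show ?thesis using DA[OF e] by simp
    qed
    define ch where "ch e = (SOME p. e = {fst p, snd p})" for e :: "'a set"
    define De where "De e = D (fst (ch e)) (snd (ch e))" for e
    have DeE: "De {u, v} = D u v" for u v
    proof -
      have "\<exists>p. {u, v} = {fst p, snd p}" by (rule exI[of _ "(u, v)"]) simp
      then have "{u, v} = {fst (ch {u, v}), snd (ch {u, v})}" unfolding ch_def by (rule someI_ex)
      then have "(fst (ch {u, v}) = u \<and> snd (ch {u, v}) = v) \<or> (fst (ch {u, v}) = v \<and> snd (ch {u, v}) = u)"
        by (auto simp: doubleton_eq_iff)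
      then show ?thesis unfolding De_def using Dsym by auto
    qed
    have cross_sub: "cross_edges V L EH x \<subseteq> (\<Union>e\<in>E. De e)"
    proof
      fix c assume "c \<in> cross_edges V L EH x"
      then obtain u v a b where c: "c \<in> EH" "u \<in> V" "v \<in> V" "u \<noteq> v" "a \<in> L u - N" "b \<in> L v - N" "c = {a, b}"
        unfolding cross_edges_def N_def by blast
      have "{u, v} \<in> E'" using adj3[of u v a b] c VV' by blast
      then have e: "{u, v} \<in> E" using E'V c(2,3) by blast
      have "c \<in> D u v" using c unfolding D_def by blast
      then show "c \<in> (\<Union>e\<in>E. De e)" using e DeE by blast
    qed
    have Defin: "finite (De e) \<and> card (De e) \<le> m - 1" if "e \<in> E" for e
      using Eedge[OF that] DeE Dle that by auto
    have "card (cross_edges V L EH x) \<le> card (\<Union>e\<in>E. De e)"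
      using cross_sub Defin finE by (intro card_mono) auto
    also have "\<dots> \<le> (\<Sum>e\<in>E. card (De e))" using card_UN_le[OF finE] .
    also have "\<dots> = card (De {u0, v0}) + (\<Sum>e\<in>E - {{u0, v0}}. card (De e))"
      using sum.remove[OF finE e0] .
    also have "\<dots> \<le> (m - 2) + (\<Sum>e\<in>E - {{u0, v0}}. (m - 1))"
      using Dbad[OF e0 bad] DeE Defin by (intro add_mono sum_mono) auto
    also have "\<dots> = (m - 2) + (card E - 1) * (m - 1)" using finE e0 by simp
    also have "\<dots> < card E * (m - 1)"
    proof -
      obtain k where k: "card E = Suc k" using card_gt_0_iff finE e0 by (metis gr0_implies_Suc empty_iff)
      show ?thesis using m2 unfolding k by simp
    qed
    finally show False using lev unfolding level_vertex_def by simp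
  qed
  define S where "S = {x \<in> L w. level_vertex V E L EH m x}"
  have SL: "S \<subseteq> L w" unfolding S_def by blast
  have finLw: "finite (L w)" and cLw: "card (L w) = m" using cardL[OF wV'] by auto
  have "card (L w - S) = m - card S" using card_Diff_subset[OF finite_subset[OF SL finLw] SL] cLw by simp
  moreover have "card S \<ge> m - 1" using levels unfolding S_def .
  ultimately have "card (L w - S) \<le> Suc 0" by simp
  then have one: "\<And>a b. a \<in> L w - S \<Longrightarrow> b \<in> L w - S \<Longrightarrow> a = b"
    using card_le_Suc0_iff_eq[of "L w - S"] finLw by blast
  have Sgood: "good x" if "x \<in> S" for x using lev_good that unfolding S_def by blast
  have all_good: "good x" if xw: "x \<in> L w" for x
  proof (cases "x \<in> S")
    case True then show ?thesis using Sgood by blast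
  next
    case False
    show ?thesis unfolding good_def
    proof (intro allI impI)
      fix u v assume e: "{u, v} \<in> E"
      have uV: "u \<in> V" and vV: "v \<in> V" using EV[OF e] by auto
      have pu: "pt u x \<in> L u" using ptw[OF uV xw] by blast
      have b: "pt v (pt u x) \<in> L v" "{pt u x, pt v (pt u x)} \<in> EH" using ptE[OF e pu] by auto
      obtain y where y: "y \<in> L w" "pt v (pt u x) = pt v y" using b(1) bijw[OF vV] unfolding bij_betw_def by blast
      show "{pt u x, pt v x} \<in> EH"
      proof (cases "y = x")
        case True then show ?thesis using b y by simp
      next
        case yx: False
        then have "y \<in> S" using one[of x y] False xw y(1) by blast
        then have "{pt u y, pt v y} \<in> EH" using Sgood e unfolding good_def by blast
        have e2: "{v, u} \<in> E" using e by (simp add: insert_commute)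
        have "\<forall>c. c \<in> L u \<and> {pt v y, c} \<in> EH \<longrightarrow> c = pt u (pt v y)"
          using ptE[OF e2, of "pt v y"] b(1) y(2) by auto
        then have "pt u y = pt u x"
          using \<open>{pt u y, pt v y} \<in> EH\<close> b(2) y(2) pu ptw[OF uV y(1)] by (metis insert_commute)
        then have "y = x" using bijw[OF uV] y(1) xw unfolding bij_betw_def inj_on_def by blast
        then show ?thesis using yx by blast
      qed
    qed
  qed
  obtain \<psi> where psi: "bij_betw \<psi> {..<m} (L w)"
    using ex_bij_betw_nat_finite[of "L w"] cardL[OF wV'] by (auto simp: atLeast0LessThan)
  define \<phi> where "\<phi> v j = (if v = w then \<psi> j else pt v (\<psi> j))" for v j
  have "natural_labeling V' E' L EH m \<phi>"
    unfolding natural_labeling_def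
  proof (intro conjI ballI impI allI)
    fix v assume vV': "v \<in> V'"
    show "bij_betw (\<phi> v) {..<m} (L v)"
    proof (cases "v = w")
      case True
      then show ?thesis using psi unfolding \<phi>_def by simp
    next
      case False
      then have vV: "v \<in> V" using vV' V'_def2 by blast
      have "bij_betw (pt v \<circ> \<psi>) {..<m} (L v)" using bij_betw_trans[OF psi bijw[OF vV]] .
      moreover have "\<phi> v = pt v \<circ> \<psi>" using False unfolding \<phi>_def by (simp add: fun_eq_iff)
      ultimately show ?thesis by simp
    qed
  next
    fix u v j assume uV: "u \<in> V'" and vV: "v \<in> V'" and e: "{u, v} \<in> E'" and j: "j < m"
    have pj: "\<psi> j \<in> L w" using psi j bij_betwE by blast
    show "{\<phi> u j, \<phi> v j} \<in> EH"
    proof (cases "{u, v} \<in> E")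
      case True
      then have "u \<noteq> w" "v \<noteq> w" using EV wnew by blast+
      then show ?thesis using all_good[OF pj] True unfolding good_def \<phi>_def by simp
    next
      case False
      then obtain z where z: "z \<in> V" "{u, v} = {w, z}" using e E'_def2 by blast
      then have zw: "z \<noteq> w" using wnew by blast
      from z(2) have "(u = w \<and> v = z) \<or> (u = z \<and> v = w)" by (auto simp: doubleton_eq_iff)
      then show ?thesis
      proof
        assume "u = w \<and> v = z"
        then show ?thesis using ptw[OF z(1) pj] zw unfolding \<phi>_def by simp
      next
        assume "u = z \<and> v = w"
        then show ?thesis using ptw[OF z(1) pj] zw unfolding \<phi>_def by (simp add: insert_commute)
      qed
    qed
  qed
  then show ?thesis unfolding V'_def E'_def by blast
qed

theorem mainTheorem16:
  fixes V :: "'a set" and E :: "'a set set" and w :: 'a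
    and L :: "'a \<Rightarrow> 'b set" and VH :: "'b set" and EH :: "'b set set"
    and d m :: nat
  assumes G: "simple_graph V E"
    and conn: "connected_graph V E"
    and colG: "col V E = d" and d3: "d \<ge> 3"
    and wnew: "w \<notin> V"
    and cover: "is_cover (join_vertices w V) (join_edges w V E) L VH EH"
    and mfold: "m_fold (join_vertices w V) L m"
    and md: "m \<ge> d + 3"
    and full: "full_cover (join_vertices w V) (join_edges w V E) L EH"
    and levels: "card {x \<in> L w. level_vertex V E L EH m x} \<ge> m - 1"
  shows "(\<exists>\<phi>. natural_labeling (join_vertices w V) (join_edges w V E) L EH m \<phi> \<and>
           bij_betw (\<lambda>f. (\<lambda>v. \<phi> v (f v)) ` join_vertices w V)
             (proper_colorings (join_vertices w V) (join_edges w V E) m)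
             (DP_colorings (join_vertices w V) VH EH)) \<and>
         P_DP (join_vertices w V) VH EH = chrom_poly (join_vertices w V) (join_edges w V E) m"
proof -
  have m2: "m \<ge> 2" using md d3 by simp
  obtain \<phi> where phi: "natural_labeling (join_vertices w V) (join_edges w V E) L EH m \<phi>"
    using core[OF G wnew cover mfold m2 full levels] by blast
  have finV: "finite (join_vertices w V)" using G unfolding simple_graph_def join_vertices_def by simp
  have b: "bij_betw (\<lambda>f. (\<lambda>v. \<phi> v (f v)) ` join_vertices w V)
             (proper_colorings (join_vertices w V) (join_edges w V E) m)
             (DP_colorings (join_vertices w V) VH EH)"
    using bij_lemma[OF cover finV phi] .
  then have "P_DP (join_vertices w V) VH EH = chrom_poly (join_vertices w V) (join_edges w V E) m"
    unfolding P_DP_def chrom_poly_def using bij_betw_same_card by metis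
  then show ?thesis using phi b by blast
qed

end
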